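(* Let $I,J,t\in\mathbb{N}$ and $f:\{0,1\}^d\to\{0,1\}$ arbitrary, and let $\eta=\Pr_{x,y,z\sim\{0,1\}^d}[T_f(x,y,z)=1]$ for independent uniform $x,y,z$. If $z$ and $x_i^{(\ell)},y_j^{(\ell)}$ for $(i,j,\ell)\in[I]\times[J]\times[t+1]$ are sampled uniformly and independently from $\{0,1\}^d$, then $$\Pr\Big[\bigcap_{i\in[I],\,j\in[J],\,\ell\in[t+1]}\big[T_f(x_i^{(\ell)},y_j^{(\ell)},z)=1\big]\Big]\ge\eta^{IJ(t+1)}.$$
   Context: For $f:\{0,1\}^d\to\{0,1\}$ and $x,y,z\in\{0,1\}^d$, $T_f(x,y,z)=\sum_{\emptyset\neq S\subseteq\{x,y,z\}} f\big(\bigoplus_{u\in S}u\big)\bmod 2$ (the sum of $f$ over $x,y,z,x\oplus y,x\oplus z,y\oplus z,x\oplus y\oplus z$), where $\oplus$ is bitwise XOR. *)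

theory Defs
  imports "HOL-Probability.Probability"
begin

text \<open>The cube {0,1}^d, elements represented as boolean lists of length d
  (True = 1, False = 0).\<close>
definition cube :: "nat \<Rightarrow> bool list set" where
  "cube d = {v. length v = d}"

definition bxor :: "bool list \<Rightarrow> bool list \<Rightarrow> bool list" where
  "bxor u v = map2 (\<noteq>) u v"

text \<open>T_f(x,y,z): sum of f over the seven nonempty XOR-combinations, mod 2.
  f : {0,1}^d -> {0,1} is given as a function into nat; only its values on the
  cube matter, and the theorem assumes they lie in {0,1}.\<close>
definition Tf :: "(bool list \<Rightarrow> nat) \<Rightarrow> bool list \<Rightarrow> bool list \<Rightarrow> bool list \<Rightarrow> nat" where
  "Tf f x y z = (f x + f y + f z + f (bxor x y) + f (bxor x z) + f (bxor y z)
                 + f (bxor (bxor x y) z)) mod 2"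

definition eta :: "nat \<Rightarrow> (bool list \<Rightarrow> nat) \<Rightarrow> real" where
  "eta d f = measure_pmf.prob (pmf_of_set (cube d \<times> cube d \<times> cube d))
              {(x, y, z). Tf f x y z = 1}"

end

theory Submission
  imports Defs
begin

definition avg :: "'a set \<Rightarrow> ('a \<Rightarrow> real) \<Rightarrow> real" where
  "avg S h = (\<Sum>s\<in>S. h s) / real (card S)"

lemma avg_nonneg: "(\<And>s. s \<in> S \<Longrightarrow> h s \<ge> 0) \<Longrightarrow> avg S h \<ge> 0"
  unfolding avg_def by (intro divide_nonneg_nonneg sum_nonneg) auto

lemma avg_mono: "(\<And>s. s \<in> S \<Longrightarrow> h s \<le> k s) \<Longrightarrow> avg S h \<le> avg S k"
  unfolding avg_def by (intro divide_right_mono sum_mono) auto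

lemma avg_cong: "(\<And>s. s \<in> S \<Longrightarrow> h s = k s) \<Longrightarrow> avg S h = avg S k"
  unfolding avg_def by (metis sum.cong)

lemma avg_swap: "avg A (\<lambda>a. avg B (\<lambda>b. h a b)) = avg B (\<lambda>b. avg A (\<lambda>a. h a b))"
  unfolding avg_def by (simp add: sum_divide_distrib[symmetric] sum.swap[of _ A B])

lemma avg_times:
  assumes "finite A" "finite B"
  shows "avg (A \<times> B) (\<lambda>p. h (fst p) (snd p)) = avg A (\<lambda>a. avg B (h a))"
proof -
  have "(\<Sum>p\<in>A \<times> B. h (fst p) (snd p)) = (\<Sum>a\<in>A. \<Sum>b\<in>B. h a b)"
    by (simp add: sum.cartesian_product split_def)
  then show ?thesis unfolding avg_def using assms
    by (simp add: card_cartesian_product sum_divide_distrib[symmetric] mult.commute)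
qed

lemma avg_PiE:
  assumes "finite K" "\<And>k. k \<in> K \<Longrightarrow> finite (B k)"
  shows "avg (PiE K B) (\<lambda>f. \<Prod>k\<in>K. g k (f k)) = (\<Prod>k\<in>K. avg (B k) (g k))"
proof -
  have "(\<Sum>f\<in>PiE K B. \<Prod>k\<in>K. g k (f k)) = (\<Prod>k\<in>K. \<Sum>b\<in>B k. g k b)"
    using prod_sum_PiE[OF assms, where f=g] by simp
  then show ?thesis unfolding avg_def
    by (simp add: card_PiE[OF assms(1)] prod_dividef)
qed

lemma avg_const: "finite S \<Longrightarrow> S \<noteq> {} \<Longrightarrow> avg S (\<lambda>_. c) = c"
  unfolding avg_def by simp

lemma avg_bij:
  assumes "bij_betw \<phi> B A"
  shows "avg A h = avg B (\<lambda>b. h (\<phi> b))"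
  unfolding avg_def using sum.reindex_bij_betw[OF assms, of h] bij_betw_same_card[OF assms]
  by simp

lemma convex_pow: "convex_on {0::real..} (\<lambda>x. x^n)"
proof (cases "even n")
  case True
  then show ?thesis using convex_power_even convex_on_subset by blast
next
  case False
  then show ?thesis using convex_power_odd by blast
qed

lemma avg_jensen:
  assumes "finite S" "S \<noteq> {}" "\<And>s. s \<in> S \<Longrightarrow> h s \<ge> 0"
  shows "avg S h ^ n \<le> avg S (\<lambda>s. h s ^ n)"
proof -
  have c: "card S > 0" using assms card_gt_0_iff by blast
  have "(\<Sum>i\<in>S. (1 / real (card S)) *\<^sub>R h i) ^ n \<le> (\<Sum>i\<in>S. (1 / real (card S)) * h i ^ n)"
    using convex_on_sum[OF assms(1,2) convex_pow[of n], where a = "\<lambda>_. 1 / real (card S)" and y = h]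
    using assms c by auto
  then show ?thesis unfolding avg_def
    by (simp add: sum_distrib_right[symmetric] sum_distrib_left[symmetric] divide_inverse mult.commute)
qed

lemma bij_uncurry:
  "bij_betw (\<lambda>U. \<lambda>(i,l). if i \<in> A \<and> l \<in> B then U l i else undefined)
     (PiE B (\<lambda>_. PiE A (\<lambda>_. S))) (PiE (A \<times> B) (\<lambda>_. S))"
proof (rule bij_betw_byWitness[where f' = "\<lambda>X. \<lambda>l. if l \<in> B then (\<lambda>i. if i \<in> A then X (i,l) else undefined) else undefined"])
  show "\<forall>U\<in>PiE B (\<lambda>_. PiE A (\<lambda>_. S)). (\<lambda>l. if l \<in> B then (\<lambda>i. if i \<in> A then (\<lambda>(i,l). if i \<in> A \<and> l \<in> B then U l i else undefined) (i,l) else undefined) else undefined) = U"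
    by (auto simp: PiE_iff extensional_def fun_eq_iff)
  show "\<forall>X\<in>PiE (A \<times> B) (\<lambda>_. S). (\<lambda>(i,l). if i \<in> A \<and> l \<in> B then (if l \<in> B then (\<lambda>i. if i \<in> A then X (i,l) else undefined) else undefined) i else undefined) = X"
    by (auto simp: PiE_iff extensional_def fun_eq_iff)
  show "(\<lambda>U. \<lambda>(i,l). if i \<in> A \<and> l \<in> B then U l i else undefined) ` PiE B (\<lambda>_. PiE A (\<lambda>_. S)) \<subseteq> PiE (A \<times> B) (\<lambda>_. S)"
    by (auto simp: PiE_iff extensional_def split: if_splits)
  show "(\<lambda>X. \<lambda>l. if l \<in> B then (\<lambda>i. if i \<in> A then X (i,l) else undefined) else undefined) ` PiE (A \<times> B) (\<lambda>_. S) \<subseteq> PiE B (\<lambda>_. PiE A (\<lambda>_. S))"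
    by (auto simp: PiE_iff extensional_def split: if_splits)
qed

lemma avg_times3:
  assumes "finite A" "finite B" "finite C"
  shows "avg (A \<times> (B \<times> C)) h = avg A (\<lambda>a. avg B (\<lambda>b. avg C (\<lambda>c. h (a,b,c))))"
proof -
  have "avg (A \<times> (B \<times> C)) h = avg (A \<times> (B \<times> C)) (\<lambda>p. (\<lambda>a q. h (a,q)) (fst p) (snd p))"
    by simp
  also have "\<dots> = avg A (\<lambda>a. avg (B \<times> C) (\<lambda>q. h (a,q)))"
    using assms by (subst avg_times) auto
  also have "\<dots> = avg A (\<lambda>a. avg B (\<lambda>b. avg C (\<lambda>c. h (a,b,c))))"
  proof (rule avg_cong)
    fix a
    have "avg (B \<times> C) (\<lambda>q. h (a,q)) = avg (B \<times> C) (\<lambda>q. (\<lambda>b c. h (a,b,c)) (fst q) (snd q))"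
      by simp
    also have "\<dots> = avg B (\<lambda>b. avg C (\<lambda>c. h (a,b,c)))"
      using assms by (subst avg_times) auto
    finally show "avg (B \<times> C) (\<lambda>q. h (a,q)) = avg B (\<lambda>b. avg C (\<lambda>c. h (a,b,c)))" .
  qed
  finally show ?thesis .
qed

lemma grid:
  fixes g :: "'a \<Rightarrow> 'a \<Rightarrow> real" and II :: "'i set" and JJ :: "'j set" and L :: "'l set"
  assumes S: "finite S" "S \<noteq> {}" and g: "\<And>x y. g x y \<ge> 0"
    and fin: "finite II" "finite JJ" "finite L"
  shows "avg (PiE (II \<times> L) (\<lambda>_. S)) (\<lambda>X. avg (PiE (JJ \<times> L) (\<lambda>_. S))
            (\<lambda>Y. \<Prod>i\<in>II. \<Prod>j\<in>JJ. \<Prod>l\<in>L. g (X (i,l)) (Y (j,l))))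
         \<ge> (avg S (\<lambda>x. avg S (g x))) ^ (card II * card JJ * card L)"
proof -
  define PI where "PI = PiE II (\<lambda>_. S)"
  define PJ where "PJ = PiE JJ (\<lambda>_. S)"
  define H where "H u v = (\<Prod>i\<in>II. \<Prod>j\<in>JJ. g (u i) (v j))" for u v
  define M where "M = avg PI (\<lambda>u. avg PJ (H u))"
  define q where "q = avg S (\<lambda>x. avg S (g x))"
  have fPI: "finite PI" "PI \<noteq> {}" unfolding PI_def using S fin by (auto simp: finite_PiE PiE_eq_empty_iff)
  have fPJ: "finite PJ" "PJ \<noteq> {}" unfolding PJ_def using S fin by (auto simp: finite_PiE PiE_eq_empty_iff)
  have Hnn: "H u v \<ge> 0" for u v unfolding H_def using g by (intro prod_nonneg) auto
  have q0: "q \<ge> 0" unfolding q_def using g by (intro avg_nonneg) auto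
  have swap3: "(\<Prod>i\<in>II. \<Prod>j\<in>JJ. \<Prod>l\<in>L. F i j l) = (\<Prod>l\<in>L. \<Prod>i\<in>II. \<Prod>j\<in>JJ. F i j l)"
    for F :: "'i \<Rightarrow> 'j \<Rightarrow> 'l \<Rightarrow> real"
  proof -
    have "(\<Prod>i\<in>II. \<Prod>j\<in>JJ. \<Prod>l\<in>L. F i j l) = (\<Prod>i\<in>II. \<Prod>l\<in>L. \<Prod>j\<in>JJ. F i j l)"
      by (rule prod.cong[OF refl], rule prod.swap)
    also have "\<dots> = (\<Prod>l\<in>L. \<Prod>i\<in>II. \<Prod>j\<in>JJ. F i j l)"
      by (rule prod.swap)
    finally show ?thesis .
  qed
  have step1: "avg (PiE (II \<times> L) (\<lambda>_. S)) (\<lambda>X. avg (PiE (JJ \<times> L) (\<lambda>_. S))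
            (\<lambda>Y. \<Prod>i\<in>II. \<Prod>j\<in>JJ. \<Prod>l\<in>L. g (X (i,l)) (Y (j,l))))
     = avg (PiE L (\<lambda>_. PI)) (\<lambda>U. avg (PiE L (\<lambda>_. PJ)) (\<lambda>V. \<Prod>l\<in>L. H (U l) (V l)))"
    unfolding PI_def PJ_def
    apply (subst avg_bij[OF bij_uncurry[of II L S]])
    apply (rule avg_cong)
    apply (subst avg_bij[OF bij_uncurry[of JJ L S]])
    apply (rule avg_cong)
    apply (subst swap3)
    apply (simp add: H_def)
    done
  have step2: "avg (PiE L (\<lambda>_. PJ)) (\<lambda>V. \<Prod>l\<in>L. H (U l) (V l)) = (\<Prod>l\<in>L. avg PJ (H (U l)))" for U
    using avg_PiE[of L "\<lambda>_. PJ" "\<lambda>l v. H (U l) v"] fin fPJ by simp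
  have step3: "avg (PiE L (\<lambda>_. PI)) (\<lambda>U. \<Prod>l\<in>L. avg PJ (H (U l))) = M ^ card L"
    using avg_PiE[of L "\<lambda>_. PI" "\<lambda>l u. avg PJ (H u)"] fin fPI by (simp add: M_def)
  have step4: "M \<ge> q ^ (card II * card JJ)"
  proof -
    define r where "r v = avg S (\<lambda>x. \<Prod>j\<in>JJ. g x (v j))" for v
    have r0: "r v \<ge> 0" for v unfolding r_def using g by (intro avg_nonneg prod_nonneg) auto
    have "M = avg PJ (\<lambda>v. avg PI (\<lambda>u. H u v))" unfolding M_def by (rule avg_swap)
    also have "\<dots> = avg PJ (\<lambda>v. r v ^ card II)"
    proof (rule avg_cong)
      fix v
      show "avg PI (\<lambda>u. H u v) = r v ^ card II"
        using avg_PiE[of II "\<lambda>_. S" "\<lambda>i x. \<Prod>j\<in>JJ. g x (v j)"] fin S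
        unfolding PI_def H_def r_def by simp
    qed
    finally have M1: "M = avg PJ (\<lambda>v. r v ^ card II)" .
    have "avg PJ r = avg S (\<lambda>x. avg PJ (\<lambda>v. \<Prod>j\<in>JJ. g x (v j)))"
      unfolding r_def by (rule avg_swap)
    also have "\<dots> = avg S (\<lambda>x. avg S (g x) ^ card JJ)"
    proof (rule avg_cong)
      fix x
      show "avg PJ (\<lambda>v. \<Prod>j\<in>JJ. g x (v j)) = avg S (g x) ^ card JJ"
        using avg_PiE[of JJ "\<lambda>_. S" "\<lambda>j y. g x y"] fin S unfolding PJ_def by simp
    qed
    also have "\<dots> \<ge> q ^ card JJ" unfolding q_def
      using avg_jensen[OF S, of "\<lambda>x. avg S (g x)" "card JJ"] g by (auto intro: avg_nonneg)
    finally have "q ^ card JJ \<le> avg PJ r" .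
    then have "(q ^ card JJ) ^ card II \<le> avg PJ r ^ card II"
      using q0 by (intro power_mono) auto
    also have "\<dots> \<le> M" unfolding M1 using avg_jensen[OF fPJ, of r "card II"] r0 by auto
    finally show ?thesis by (simp add: power_mult[symmetric] mult.commute)
  qed
  have M0: "M \<ge> 0" unfolding M_def using Hnn by (intro avg_nonneg) auto
  have "(q ^ (card II * card JJ)) ^ card L \<le> M ^ card L"
    using step4 q0 by (intro power_mono) auto
  then show ?thesis unfolding step1 step2 step3 q_def[symmetric] by (simp add: power_mult)
qed

lemma sum_ind_real: "finite A \<Longrightarrow> (\<Sum>x\<in>A. indicator B x :: real) = real (card (A \<inter> B))"
  by (induction A rule: finite_induct) (auto simp: indicator_def Int_insert_left)

lemma prod_01:
  assumes "finite K"
  shows "(\<Prod>k\<in>K. if P k then 1 else 0 :: real) = (if \<forall>k\<in>K. P k then 1 else 0)"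
  using assms by (induction K rule: finite_induct) auto

lemma cube_fin: "finite (cube d)" and cube_ne: "cube d \<noteq> {}"
proof -
  have "cube d = {xs. set xs \<subseteq> UNIV \<and> length xs = d}" unfolding cube_def by auto
  then show "finite (cube d)" using finite_lists_length_eq[of "UNIV :: bool set" d] by simp
  have "replicate d True \<in> cube d" unfolding cube_def by simp
  then show "cube d \<noteq> {}" by blast
qed

theorem claim4p4:
  fixes d I J t :: nat and f :: "bool list \<Rightarrow> nat"
  assumes "\<forall>v \<in> cube d. f v \<in> {0, 1}"
  shows "measure_pmf.prob
           (pmf_of_set (cube d \<times> (PiE ({..<I} \<times> {..<t+1}) (\<lambda>_. cube d))
                               \<times> (PiE ({..<J} \<times> {..<t+1}) (\<lambda>_. cube d))))
           {(z, X, Y). \<forall>i<I. \<forall>j<J. \<forall>l<t+1. Tf f (X (i, l)) (Y (j, l)) z = 1}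
         \<ge> eta d f ^ (I * J * (t + 1))"
proof -
  define S where "S = cube d"
  define PX where "PX = PiE ({..<I} \<times> {..<t+1}) (\<lambda>_. S)"
  define PY where "PY = PiE ({..<J} \<times> {..<t+1}) (\<lambda>_. S)"
  define E where "E = {(z, X, Y). \<forall>i<I. \<forall>j<J. \<forall>l<t+1. Tf f (X (i, l)) (Y (j, l)) z = 1}"
  define G where "G z x y = (if Tf f x y z = 1 then 1 else 0 :: real)" for z x y
  define q where "q z = avg S (\<lambda>x. avg S (G z x))" for z
  define n where "n = I * J * (t + 1)"
  have S: "finite S" "S \<noteq> {}" unfolding S_def using cube_fin cube_ne by auto
  have fPX: "finite PX" "PX \<noteq> {}" unfolding PX_def using S by (auto simp: finite_PiE PiE_eq_empty_iff)
  have fPY: "finite PY" "PY \<noteq> {}" unfolding PY_def using S by (auto simp: finite_PiE PiE_eq_empty_iff)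
  have G0: "G z x y \<ge> 0" for z x y unfolding G_def by auto
  have q0: "q z \<ge> 0" for z unfolding q_def using G0 by (intro avg_nonneg) auto
  have fin\<Omega>: "finite (S \<times> (PX \<times> PY))" "S \<times> (PX \<times> PY) \<noteq> {}" using S fPX fPY by auto
  have "measure_pmf.prob (pmf_of_set (S \<times> (PX \<times> PY))) E
       = real (card ((S \<times> (PX \<times> PY)) \<inter> E)) / real (card (S \<times> (PX \<times> PY)))"
    using measure_pmf_of_set[OF fin\<Omega>(2,1)] by simp
  also have "\<dots> = avg (S \<times> (PX \<times> PY)) (indicator E)"
  proof -
    have "(\<Sum>x\<in>S \<times> (PX \<times> PY). (indicator E x :: real)) = real (card ((S \<times> (PX \<times> PY)) \<inter> E))"
      by (rule sum_ind_real[OF fin\<Omega>(1)])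
    then show ?thesis unfolding avg_def by simp
  qed
  also have "\<dots> = avg S (\<lambda>z. avg PX (\<lambda>X. avg PY (\<lambda>Y. indicator E (z, X, Y))))"
    using S fPX fPY by (simp add: avg_times3)
  also have "\<dots> = avg S (\<lambda>z. avg PX (\<lambda>X. avg PY (\<lambda>Y.
       \<Prod>i\<in>{..<I}. \<Prod>j\<in>{..<J}. \<Prod>l\<in>{..<t+1}. G z (X (i,l)) (Y (j,l)))))"
  proof -
    have "indicator E (z, X, Y) = (\<Prod>i\<in>{..<I}. \<Prod>j\<in>{..<J}. \<Prod>l\<in>{..<t+1}. G z (X (i,l)) (Y (j,l)))"
      for z X Y
      unfolding G_def by (simp only: prod_01 finite_lessThan) (auto simp: indicator_def E_def lessThan_iff)
    then show ?thesis by presburger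
  qed
  finally have P: "measure_pmf.prob (pmf_of_set (S \<times> (PX \<times> PY))) E = \<dots>" .
  have "avg S (\<lambda>z. q z ^ n) \<le> avg S (\<lambda>z. avg PX (\<lambda>X. avg PY (\<lambda>Y.
       \<Prod>i\<in>{..<I}. \<Prod>j\<in>{..<J}. \<Prod>l\<in>{..<t+1}. G z (X (i,l)) (Y (j,l)))))"
  proof (rule avg_mono)
    fix z
    show "q z ^ n \<le> avg PX (\<lambda>X. avg PY (\<lambda>Y.
       \<Prod>i\<in>{..<I}. \<Prod>j\<in>{..<J}. \<Prod>l\<in>{..<t+1}. G z (X (i,l)) (Y (j,l))))"
      using grid[OF S, of "G z" "{..<I}" "{..<J}" "{..<t+1}"] G0
      unfolding PX_def PY_def q_def n_def by simp
  qed
  moreover have "(avg S q) ^ n \<le> avg S (\<lambda>z. q z ^ n)"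
    using avg_jensen[OF S, of q n] q0 by simp
  moreover have "eta d f = avg S q"
  proof -
    have fin3: "finite (S \<times> (S \<times> S))" "S \<times> (S \<times> S) \<noteq> {}" using S by auto
    have "eta d f = real (card ((S \<times> (S \<times> S)) \<inter> {(x, y, z). Tf f x y z = 1})) / real (card (S \<times> (S \<times> S)))"
      unfolding eta_def S_def[symmetric] using measure_pmf_of_set[OF fin3(2,1)] by simp
    also have "\<dots> = avg (S \<times> (S \<times> S)) (indicator {(x, y, z). Tf f x y z = 1})"
    proof -
      have "(\<Sum>x\<in>S \<times> (S \<times> S). (indicator {(x, y, z). Tf f x y z = 1} x :: real))
          = real (card ((S \<times> (S \<times> S)) \<inter> {(x, y, z). Tf f x y z = 1}))"
        by (rule sum_ind_real[OF fin3(1)])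
      then show ?thesis unfolding avg_def by simp
    qed
    also have "\<dots> = avg S (\<lambda>x. avg S (\<lambda>y. avg S (\<lambda>z. G z x y)))"
      using S by (simp add: avg_times3 G_def indicator_def of_bool_def)
    also have "\<dots> = avg S (\<lambda>x. avg S (\<lambda>z. avg S (\<lambda>y. G z x y)))"
      by (rule avg_cong, rule avg_swap)
    also have "\<dots> = avg S q" unfolding q_def by (rule avg_swap)
    finally show ?thesis .
  qed
  ultimately show ?thesis
    using P unfolding S_def PX_def PY_def E_def n_def by simp
qed

end
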